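(* Let $A$, $B$, $D$ be finitely generated lattices, and assume $D$ has a finite generating set $P$ for which $D$ satisfies Dean's condition (D). If $g\colon A\to D$ and $h\colon B\to D$ are bounded lattice epimorphisms, then their fiber product $C=\{(a,b)\in A\times B : g(a)=h(b)\}$ is a finitely generated sublattice of $A\times B$.
   Context: A lattice homomorphism $g\colon A\to D$ is lower bounded if for every $d\in D$ the set $\{x\in A : g(x)\ge d\}$ is either empty or has a least element; it is upper bounded if for every $d\in D$ the set $\{x\in A : g(x)\le d\}$ is either empty or has a greatest element; it is bounded if it is both lower and upper bounded. A lattice $D$ with finite generating set $P$ satisfies Dean's condition (D) (for $P$) if for all finite subsets $S,T\subseteq D$ with $\bigwedge S\le\bigvee T$ at least one of the following holds: there is $s\in S$ with $s\le\bigvee T$; there is $t\in T$ with $\bigwedge S\le t$; there is $p\in P$ with $\bigwedge S\le p\le\bigvee T$. (In a finitely generated lattice the empty meet is the top and the empty join is the bottom element.) The fiber product of epimorphisms $g\colon A\to D$, $h\colon B\to D$ is the sublattice $\{(a,b)\in A\times B: g(a)=h(b)\}$ of $A\times B$. *)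

theory Defs
  imports Main "HOL-Library.Product_Order"
begin

inductive_set lgen :: "'a::lattice set \<Rightarrow> 'a set" for X :: "'a set" where
  base: "x \<in> X \<Longrightarrow> x \<in> lgen X"
| meet: "x \<in> lgen X \<Longrightarrow> y \<in> lgen X \<Longrightarrow> inf x y \<in> lgen X"
| join: "x \<in> lgen X \<Longrightarrow> y \<in> lgen X \<Longrightarrow> sup x y \<in> lgen X"

definition fin_gen_lattice :: "'a::lattice itself \<Rightarrow> bool" where
  "fin_gen_lattice _ \<longleftrightarrow> (\<exists>X::'a set. finite X \<and> lgen X = UNIV)"

definition fin_gen_sublattice :: "'a::lattice set \<Rightarrow> bool" where
  "fin_gen_sublattice C \<longleftrightarrow> (\<exists>X. finite X \<and> X \<subseteq> C \<and> lgen X = C)"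

definition lattice_hom :: "('a::lattice \<Rightarrow> 'b::lattice) \<Rightarrow> bool" where
  "lattice_hom g \<longleftrightarrow> (\<forall>x y. g (inf x y) = inf (g x) (g y) \<and> g (sup x y) = sup (g x) (g y))"

definition lower_bounded :: "('a::lattice \<Rightarrow> 'b::lattice) \<Rightarrow> bool" where
  "lower_bounded g \<longleftrightarrow> (\<forall>d. {x. d \<le> g x} = {} \<or>
      (\<exists>m. d \<le> g m \<and> (\<forall>x. d \<le> g x \<longrightarrow> m \<le> x)))"

definition upper_bounded :: "('a::lattice \<Rightarrow> 'b::lattice) \<Rightarrow> bool" where
  "upper_bounded g \<longleftrightarrow> (\<forall>d. {x. g x \<le> d} = {} \<or>
      (\<exists>m. g m \<le> d \<and> (\<forall>x. g x \<le> d \<longrightarrow> x \<le> m)))"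

definition bounded_hom :: "('a::lattice \<Rightarrow> 'b::lattice) \<Rightarrow> bool" where
  "bounded_hom g \<longleftrightarrow> lower_bounded g \<and> upper_bounded g"

text \<open>Top and bottom of a (finitely generated, hence bounded) lattice, and finite meets/joins
  with the conventions empty meet = top, empty join = bottom.\<close>
definition lat_top :: "'a::lattice" where "lat_top = (THE t. \<forall>y. y \<le> t)"
definition lat_bot :: "'a::lattice" where "lat_bot = (THE b. \<forall>y. b \<le> y)"

definition fmeet :: "'a::lattice set \<Rightarrow> 'a" where
  "fmeet S = (if S = {} then lat_top else Inf_fin S)"
definition fjoin :: "'a::lattice set \<Rightarrow> 'a" where
  "fjoin T = (if T = {} then lat_bot else Sup_fin T)"

definition dean_condition :: "'a::lattice set \<Rightarrow> bool" where
  "dean_condition P \<longleftrightarrow> finite P \<and> lgen P = UNIV \<and>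
     (\<forall>S T. finite S \<and> finite T \<and> fmeet S \<le> fjoin T \<longrightarrow>
        (\<exists>s\<in>S. s \<le> fjoin T) \<or> (\<exists>t\<in>T. fmeet S \<le> t) \<or> (\<exists>p\<in>P. fmeet S \<le> p \<and> p \<le> fjoin T))"

end

theory Submission
  imports Defs
begin

lemma hom_mono:
  assumes "lattice_hom f" "x \<le> y" shows "f x \<le> f y"
proof -
  have "f (inf x y) = inf (f x) (f y)" using assms(1) unfolding lattice_hom_def by blast
  moreover have "inf x y = x" using assms(2) by (simp add: inf.absorb1)
  ultimately show ?thesis by (metis inf.cobounded2)
qed

lemma hom_inf: "lattice_hom f \<Longrightarrow> f (inf x y) = inf (f x) (f y)"
  unfolding lattice_hom_def by blast
lemma hom_sup: "lattice_hom f \<Longrightarrow> f (sup x y) = sup (f x) (f y)"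
  unfolding lattice_hom_def by blast

lemma fmeet2: "fmeet {a, b} = inf a b" unfolding fmeet_def by simp
lemma fjoin2: "fjoin {a, b} = sup a b" unfolding fjoin_def by simp

lemma keyMeet:
  fixes h :: "'b::lattice \<Rightarrow> 'd::lattice"
  assumes hom: "lattice_hom h" and lgX: "lgen X = UNIV" and dean: "dean_condition P"
    and b1: "\<And>d. d \<le> h (bh d)" and b2: "\<And>d x. d \<le> h x \<Longrightarrow> bh d \<le> x"
    and c1: "c \<le> bh d1" and c2: "c \<le> bh d2"
    and cP: "\<And>p. p \<in> P \<Longrightarrow> inf d1 d2 \<le> p \<Longrightarrow> c \<le> bh p"
    and cX: "\<And>x. x \<in> X \<Longrightarrow> inf d1 d2 \<le> h x \<Longrightarrow> c \<le> x"
  shows "c \<le> bh (inf d1 d2)"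
proof -
  have D: "\<forall>S T. finite S \<and> finite T \<and> fmeet S \<le> fjoin T \<longrightarrow>
        (\<exists>s\<in>S. s \<le> fjoin T) \<or> (\<exists>t\<in>T. fmeet S \<le> t) \<or> (\<exists>p\<in>P. fmeet S \<le> p \<and> p \<le> fjoin T)"
    using dean unfolding dean_condition_def by blast
  have "b \<in> lgen X \<Longrightarrow> inf d1 d2 \<le> h b \<Longrightarrow> c \<le> b" for b
  proof (induction rule: lgen.induct)
    case (base x) then show ?case by (rule cX)
  next
    case (meet x y)
    then have "inf d1 d2 \<le> h x" "inf d1 d2 \<le> h y" using hom_inf[OF hom] by (auto simp: le_inf_iff)
    then show ?case using meet by simp
  next
    case (join x y)
    then have le: "fmeet {d1, d2} \<le> fjoin {h x, h y}" using hom_sup[OF hom] by (simp add: fmeet2 fjoin2)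
    from D[rule_format, OF conjI[OF _ conjI[OF _ le]]]
    have "(\<exists>s\<in>{d1,d2}. s \<le> fjoin {h x, h y}) \<or> (\<exists>t\<in>{h x, h y}. fmeet {d1,d2} \<le> t)
          \<or> (\<exists>p\<in>P. fmeet {d1,d2} \<le> p \<and> p \<le> fjoin {h x, h y})" by simp
    then show ?case
    proof (elim disjE bexE conjE)
      fix s assume "s \<in> {d1, d2}" "s \<le> fjoin {h x, h y}"
      then have "s \<le> h (sup x y)" using hom_sup[OF hom] by (simp add: fjoin2)
      then have "bh s \<le> sup x y" by (rule b2)
      moreover have "c \<le> bh s" using \<open>s \<in> {d1, d2}\<close> c1 c2 by auto
      ultimately show ?thesis by (rule order_trans[rotated])
    next
      fix t assume "t \<in> {h x, h y}" "fmeet {d1, d2} \<le> t"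
      then show ?thesis using join by (auto simp: fmeet2 intro: le_supI1 le_supI2)
    next
      fix p assume "p \<in> P" "fmeet {d1, d2} \<le> p" "p \<le> fjoin {h x, h y}"
      then have "c \<le> bh p" using cP by (simp add: fmeet2)
      moreover have "bh p \<le> sup x y" using \<open>p \<le> fjoin {h x, h y}\<close> hom_sup[OF hom]
        by (intro b2) (simp add: fjoin2)
      ultimately show ?thesis by (rule order_trans)
    qed
  qed
  then show ?thesis using lgX b1 by blast
qed

lemma keyJoin:
  fixes g :: "'a::lattice \<Rightarrow> 'd::lattice"
  assumes hom: "lattice_hom g" and lgX: "lgen X = UNIV" and dean: "dean_condition P"
    and a1: "\<And>d. g (ag d) \<le> d" and a2: "\<And>d x. g x \<le> d \<Longrightarrow> x \<le> ag d"
    and c1: "ag d1 \<le> c" and c2: "ag d2 \<le> c"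
    and cP: "\<And>p. p \<in> P \<Longrightarrow> p \<le> sup d1 d2 \<Longrightarrow> ag p \<le> c"
    and cX: "\<And>x. x \<in> X \<Longrightarrow> g x \<le> sup d1 d2 \<Longrightarrow> x \<le> c"
  shows "ag (sup d1 d2) \<le> c"
proof -
  have D: "\<forall>S T. finite S \<and> finite T \<and> fmeet S \<le> fjoin T \<longrightarrow>
        (\<exists>s\<in>S. s \<le> fjoin T) \<or> (\<exists>t\<in>T. fmeet S \<le> t) \<or> (\<exists>p\<in>P. fmeet S \<le> p \<and> p \<le> fjoin T)"
    using dean unfolding dean_condition_def by blast
  have "b \<in> lgen X \<Longrightarrow> g b \<le> sup d1 d2 \<Longrightarrow> b \<le> c" for b
  proof (induction rule: lgen.induct)
    case (base x) then show ?case by (rule cX)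
  next
    case (join x y)
    then have "g x \<le> sup d1 d2" "g y \<le> sup d1 d2" using hom_sup[OF hom] by (auto simp: le_sup_iff)
    then show ?case using join by simp
  next
    case (meet x y)
    then have le: "fmeet {g x, g y} \<le> fjoin {d1, d2}" using hom_inf[OF hom] by (simp add: fmeet2 fjoin2)
    from D[rule_format, OF conjI[OF _ conjI[OF _ le]]]
    have "(\<exists>s\<in>{g x, g y}. s \<le> fjoin {d1, d2}) \<or> (\<exists>t\<in>{d1, d2}. fmeet {g x, g y} \<le> t)
          \<or> (\<exists>p\<in>P. fmeet {g x, g y} \<le> p \<and> p \<le> fjoin {d1, d2})" by simp
    then show ?case
    proof (elim disjE bexE conjE)
      fix s assume "s \<in> {g x, g y}" "s \<le> fjoin {d1, d2}"
      then show ?thesis using meet by (auto simp: fjoin2 intro: le_infI1 le_infI2)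
    next
      fix t assume "t \<in> {d1, d2}" "fmeet {g x, g y} \<le> t"
      then have "g (inf x y) \<le> t" using hom_inf[OF hom] by (simp add: fmeet2)
      then have "inf x y \<le> ag t" by (rule a2)
      moreover have "ag t \<le> c" using \<open>t \<in> {d1, d2}\<close> c1 c2 by auto
      ultimately show ?thesis by (rule order_trans)
    next
      fix p assume "p \<in> P" "fmeet {g x, g y} \<le> p" "p \<le> fjoin {d1, d2}"
      then have "ag p \<le> c" using cP by (simp add: fjoin2)
      moreover have "inf x y \<le> ag p" using \<open>fmeet {g x, g y} \<le> p\<close> hom_inf[OF hom]
        by (intro a2) (simp add: fmeet2)
      ultimately show ?thesis by (rule order_trans[rotated])
    qed
  qed
  then show ?thesis using lgX a1 by blast
qed

lemma lgen_glb:
  assumes "finite F" "F \<noteq> {}" "F \<subseteq> lgen G"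
  shows "\<exists>z\<in>lgen G. (\<forall>f\<in>F. z \<le> f) \<and> (\<forall>w. (\<forall>f\<in>F. w \<le> f) \<longrightarrow> w \<le> z)"
  using assms
proof (induction F rule: finite_ne_induct)
  case (singleton x) then show ?case by auto
next
  case (insert x F)
  then obtain z where "z \<in> lgen G" "\<forall>f\<in>F. z \<le> f" "\<forall>w. (\<forall>f\<in>F. w \<le> f) \<longrightarrow> w \<le> z" by auto
  then show ?case using insert.prems
    by (intro bexI[of _ "inf x z"]) (auto intro: lgen.meet le_infI2)
qed

lemma lgen_lub:
  assumes "finite F" "F \<noteq> {}" "F \<subseteq> lgen G"
  shows "\<exists>z\<in>lgen G. (\<forall>f\<in>F. f \<le> z) \<and> (\<forall>w. (\<forall>f\<in>F. f \<le> w) \<longrightarrow> z \<le> w)"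
  using assms
proof (induction F rule: finite_ne_induct)
  case (singleton x) then show ?case by auto
next
  case (insert x F)
  then obtain z where "z \<in> lgen G" "\<forall>f\<in>F. f \<le> z" "\<forall>w. (\<forall>f\<in>F. f \<le> w) \<longrightarrow> z \<le> w" by auto
  then show ?case using insert.prems
    by (intro bexI[of _ "sup x z"]) (auto intro: lgen.join le_supI2)
qed


locale fp =
  fixes g :: "'a::lattice \<Rightarrow> 'd::lattice" and h :: "'b::lattice \<Rightarrow> 'd" and P :: "'d set"
    and XA :: "'a set" and XB :: "'b set"
    and ag bg :: "'d \<Rightarrow> 'a" and ah bh :: "'d \<Rightarrow> 'b"
  assumes homg: "lattice_hom g" and homh: "lattice_hom h" and sg: "surj g" and sh: "surj h"
    and dean: "dean_condition P" and XA: "lgen XA = UNIV" "finite XA"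
    and XB: "lgen XB = UNIV" "finite XB"
    and bg1: "\<And>d. d \<le> g (bg d)" and bg2: "\<And>d x. d \<le> g x \<Longrightarrow> bg d \<le> x"
    and ag1: "\<And>d. g (ag d) \<le> d" and ag2: "\<And>d x. g x \<le> d \<Longrightarrow> x \<le> ag d"
    and bh1: "\<And>d. d \<le> h (bh d)" and bh2: "\<And>d x. d \<le> h x \<Longrightarrow> bh d \<le> x"
    and ah1: "\<And>d. h (ah d) \<le> d" and ah2: "\<And>d x. h x \<le> d \<Longrightarrow> x \<le> ah d"
begin

lemma finP: "finite P" using dean unfolding dean_condition_def by blast

lemma ag_mono: "d \<le> e \<Longrightarrow> ag d \<le> ag e" by (meson ag1 ag2 order_trans)
lemma ah_mono: "d \<le> e \<Longrightarrow> ah d \<le> ah e" by (meson ah1 ah2 order_trans)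
lemma bg_mono: "d \<le> e \<Longrightarrow> bg d \<le> bg e" by (meson bg1 bg2 order_trans)
lemma bh_mono: "d \<le> e \<Longrightarrow> bh d \<le> bh e" by (meson bh1 bh2 order_trans)

lemma g_ag: "g (ag d) = d"
proof -
  obtain x where "g x = d" using sg by (metis surjD)
  then show ?thesis by (metis ag1 ag2 antisym hom_mono[OF homg] order_refl)
qed
lemma g_bg: "g (bg d) = d"
proof -
  obtain x where "g x = d" using sg by (metis surjD)
  then show ?thesis by (metis bg1 bg2 antisym hom_mono[OF homg] order_refl)
qed
lemma h_ah: "h (ah d) = d"
proof -
  obtain x where "h x = d" using sh by (metis surjD)
  then show ?thesis by (metis ah1 ah2 antisym hom_mono[OF homh] order_refl)
qed
lemma h_bh: "h (bh d) = d"
proof -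
  obtain x where "h x = d" using sh by (metis surjD)
  then show ?thesis by (metis bh1 bh2 antisym hom_mono[OF homh] order_refl)
qed

definition G where "G = (\<lambda>a. (a, bh (g a))) ` XA \<union> (\<lambda>a. (a, ah (g a))) ` XA
   \<union> (\<lambda>b. (bg (h b), b)) ` XB \<union> (\<lambda>b. (ag (h b), b)) ` XB
   \<union> (\<lambda>p. (ag p, bh p)) ` P \<union> (\<lambda>p. (bg p, ah p)) ` P"

lemma finG: "finite G" unfolding G_def using XA XB finP by auto

lemma G_sub: "G \<subseteq> {(a, b). g a = h b}"
  unfolding G_def by (auto simp: g_ag g_bg h_ah h_bh)

lemma lgen_sub: "lgen G \<subseteq> {(a, b). g a = h b}"
proof
  fix z assume "z \<in> lgen G" then show "z \<in> {(a, b). g a = h b}"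
  proof (induction rule: lgen.induct)
    case (base x) then show ?case using G_sub by auto
  next
    case (meet x y) then show ?case
      by (cases x, cases y) (auto simp: hom_inf[OF homg] hom_inf[OF homh])
  next
    case (join x y) then show ?case
      by (cases x, cases y) (auto simp: hom_sup[OF homg] hom_sup[OF homh])
  qed
qed

lemma AB_meet:
  assumes "(ag d1, bh d1) \<in> lgen G" "(ag d2, bh d2) \<in> lgen G"
  shows "(ag (inf d1 d2), bh (inf d1 d2)) \<in> lgen G"
proof -
  let ?d = "inf d1 d2"
  define F where "F = {(ag d1, bh d1), (ag d2, bh d2)} \<union> (\<lambda>p. (ag p, bh p)) ` {p\<in>P. ?d \<le> p}
     \<union> (\<lambda>x. (ag (h x), x)) ` {x\<in>XB. ?d \<le> h x}"
  have "finite F" unfolding F_def using finP XB by auto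
  moreover have "F \<noteq> {}" unfolding F_def by auto
  moreover have "F \<subseteq> lgen G" unfolding F_def using assms by (auto simp: G_def intro: lgen.base)
  ultimately obtain z where z: "z \<in> lgen G" "\<forall>f\<in>F. z \<le> f" "\<forall>w. (\<forall>f\<in>F. w \<le> f) \<longrightarrow> w \<le> z"
    using lgen_glb by blast
  have "(ag ?d, bh ?d) \<le> z"
    by (rule z(3)[rule_format]) (auto simp: F_def intro!: ag_mono bh_mono bh2 simp: h_bh)
  moreover have "fst z \<le> ag ?d"
  proof -
    have "fst z \<le> inf (ag d1) (ag d2)" using z(2) unfolding F_def
      by (auto simp: less_eq_prod_def)
    also have "\<dots> \<le> ag ?d"
      by (intro ag2) (simp add: hom_inf[OF homg] g_ag)
    finally show ?thesis .
  qed
  moreover have "snd z \<le> bh ?d"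
  proof (rule keyMeet[OF homh XB(1) dean bh1 bh2])
    show "snd z \<le> bh d1" "snd z \<le> bh d2" using z(2) unfolding F_def by (auto simp: less_eq_prod_def)
    show "snd z \<le> bh p" if "p \<in> P" "?d \<le> p" for p
      using bspec[OF z(2), of "(ag p, bh p)"] that unfolding F_def by (auto simp: less_eq_prod_def)
    show "snd z \<le> x" if "x \<in> XB" "?d \<le> h x" for x
      using bspec[OF z(2), of "(ag (h x), x)"] that unfolding F_def by (auto simp: less_eq_prod_def)
  qed
  ultimately have "z = (ag ?d, bh ?d)" by (cases z) auto
  then show ?thesis using z(1) by simp
qed

lemma AB_join:
  assumes "(ag d1, bh d1) \<in> lgen G" "(ag d2, bh d2) \<in> lgen G"
  shows "(ag (sup d1 d2), bh (sup d1 d2)) \<in> lgen G"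
proof -
  let ?d = "sup d1 d2"
  define F where "F = {(ag d1, bh d1), (ag d2, bh d2)} \<union> (\<lambda>p. (ag p, bh p)) ` {p\<in>P. p \<le> ?d}
     \<union> (\<lambda>x. (x, bh (g x))) ` {x\<in>XA. g x \<le> ?d}"
  have "finite F" unfolding F_def using finP XA by auto
  moreover have "F \<noteq> {}" unfolding F_def by auto
  moreover have "F \<subseteq> lgen G" unfolding F_def using assms by (auto simp: G_def intro: lgen.base)
  ultimately obtain z where z: "z \<in> lgen G" "\<forall>f\<in>F. f \<le> z" "\<forall>w. (\<forall>f\<in>F. f \<le> w) \<longrightarrow> z \<le> w"
    using lgen_lub by blast
  have "z \<le> (ag ?d, bh ?d)"
    by (rule z(3)[rule_format]) (auto simp: F_def intro!: ag_mono bh_mono ag2 simp: g_ag)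
  moreover have "bh ?d \<le> snd z"
  proof -
    have "bh ?d \<le> sup (bh d1) (bh d2)"
      by (intro bh2) (simp add: hom_sup[OF homh] h_bh)
    also have "\<dots> \<le> snd z" using z(2) unfolding F_def
      by (auto simp: less_eq_prod_def)
    finally show ?thesis .
  qed
  moreover have "ag ?d \<le> fst z"
  proof (rule keyJoin[OF homg XA(1) dean ag1 ag2])
    show "ag d1 \<le> fst z" "ag d2 \<le> fst z" using z(2) unfolding F_def by (auto simp: less_eq_prod_def)
    show "ag p \<le> fst z" if "p \<in> P" "p \<le> ?d" for p
      using bspec[OF z(2), of "(ag p, bh p)"] that unfolding F_def by (auto simp: less_eq_prod_def)
    show "x \<le> fst z" if "x \<in> XA" "g x \<le> ?d" for x
      using bspec[OF z(2), of "(x, bh (g x))"] that unfolding F_def by (auto simp: less_eq_prod_def)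
  qed
  ultimately have "z = (ag ?d, bh ?d)" by (cases z) auto
  then show ?thesis using z(1) by simp
qed

lemma BA_meet:
  assumes "(bg d1, ah d1) \<in> lgen G" "(bg d2, ah d2) \<in> lgen G"
  shows "(bg (inf d1 d2), ah (inf d1 d2)) \<in> lgen G"
proof -
  let ?d = "inf d1 d2"
  define F where "F = {(bg d1, ah d1), (bg d2, ah d2)} \<union> (\<lambda>p. (bg p, ah p)) ` {p\<in>P. ?d \<le> p}
     \<union> (\<lambda>x. (x, ah (g x))) ` {x\<in>XA. ?d \<le> g x}"
  have "finite F" unfolding F_def using finP XA by auto
  moreover have "F \<noteq> {}" unfolding F_def by auto
  moreover have "F \<subseteq> lgen G" unfolding F_def using assms by (auto simp: G_def intro: lgen.base)
  ultimately obtain z where z: "z \<in> lgen G" "\<forall>f\<in>F. z \<le> f" "\<forall>w. (\<forall>f\<in>F. w \<le> f) \<longrightarrow> w \<le> z"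
    using lgen_glb by blast
  have "(bg ?d, ah ?d) \<le> z"
    by (rule z(3)[rule_format]) (auto simp: F_def intro!: ah_mono bg_mono bg2 simp: g_bg)
  moreover have "snd z \<le> ah ?d"
  proof -
    have "snd z \<le> inf (ah d1) (ah d2)" using z(2) unfolding F_def
      by (auto simp: less_eq_prod_def)
    also have "\<dots> \<le> ah ?d"
      by (intro ah2) (simp add: hom_inf[OF homh] h_ah)
    finally show ?thesis .
  qed
  moreover have "fst z \<le> bg ?d"
  proof (rule keyMeet[OF homg XA(1) dean bg1 bg2])
    show "fst z \<le> bg d1" "fst z \<le> bg d2" using z(2) unfolding F_def by (auto simp: less_eq_prod_def)
    show "fst z \<le> bg p" if "p \<in> P" "?d \<le> p" for p
      using bspec[OF z(2), of "(bg p, ah p)"] that unfolding F_def by (auto simp: less_eq_prod_def)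
    show "fst z \<le> x" if "x \<in> XA" "?d \<le> g x" for x
      using bspec[OF z(2), of "(x, ah (g x))"] that unfolding F_def by (auto simp: less_eq_prod_def)
  qed
  ultimately have "z = (bg ?d, ah ?d)" by (cases z) auto
  then show ?thesis using z(1) by simp
qed

lemma BA_join:
  assumes "(bg d1, ah d1) \<in> lgen G" "(bg d2, ah d2) \<in> lgen G"
  shows "(bg (sup d1 d2), ah (sup d1 d2)) \<in> lgen G"
proof -
  let ?d = "sup d1 d2"
  define F where "F = {(bg d1, ah d1), (bg d2, ah d2)} \<union> (\<lambda>p. (bg p, ah p)) ` {p\<in>P. p \<le> ?d}
     \<union> (\<lambda>x. (bg (h x), x)) ` {x\<in>XB. h x \<le> ?d}"
  have "finite F" unfolding F_def using finP XB by auto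
  moreover have "F \<noteq> {}" unfolding F_def by auto
  moreover have "F \<subseteq> lgen G" unfolding F_def using assms by (auto simp: G_def intro: lgen.base)
  ultimately obtain z where z: "z \<in> lgen G" "\<forall>f\<in>F. f \<le> z" "\<forall>w. (\<forall>f\<in>F. f \<le> w) \<longrightarrow> z \<le> w"
    using lgen_lub by blast
  have "z \<le> (bg ?d, ah ?d)"
    by (rule z(3)[rule_format]) (auto simp: F_def intro!: bg_mono ah_mono ah2 simp: h_ah)
  moreover have "bg ?d \<le> fst z"
  proof -
    have "bg ?d \<le> sup (bg d1) (bg d2)"
      by (intro bg2) (simp add: hom_sup[OF homg] g_bg)
    also have "\<dots> \<le> fst z" using z(2) unfolding F_def
      by (auto simp: less_eq_prod_def)
    finally show ?thesis .
  qed
  moreover have "ah ?d \<le> snd z"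
  proof (rule keyJoin[OF homh XB(1) dean ah1 ah2])
    show "ah d1 \<le> snd z" "ah d2 \<le> snd z" using z(2) unfolding F_def by (auto simp: less_eq_prod_def)
    show "ah p \<le> snd z" if "p \<in> P" "p \<le> ?d" for p
      using bspec[OF z(2), of "(bg p, ah p)"] that unfolding F_def by (auto simp: less_eq_prod_def)
    show "x \<le> snd z" if "x \<in> XB" "h x \<le> ?d" for x
      using bspec[OF z(2), of "(bg (h x), x)"] that unfolding F_def by (auto simp: less_eq_prod_def)
  qed
  ultimately have "z = (bg ?d, ah ?d)" by (cases z) auto
  then show ?thesis using z(1) by simp
qed

lemma AB_BA: "(ag d, bh d) \<in> lgen G \<and> (bg d, ah d) \<in> lgen G"
proof -
  have "d \<in> lgen P" using dean unfolding dean_condition_def by blast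
  then show ?thesis
  proof (induction rule: lgen.induct)
    case (base x) then show ?case by (auto simp: G_def intro: lgen.base)
  next
    case (meet x y) then show ?case using AB_meet BA_meet by blast
  next
    case (join x y) then show ?case using AB_join BA_join by blast
  qed
qed

lemma S_all: "(a, bh (g a)) \<in> lgen G"
proof -
  have "a \<in> lgen XA" using XA by simp
  then show ?thesis
  proof (induction rule: lgen.induct)
    case (base x) then show ?case by (auto simp: G_def intro: lgen.base)
  next
    case (meet x y)
    let ?d = "g (inf x y)"
    have "inf (inf (x, bh (g x)) (y, bh (g y))) (ag ?d, bh ?d) \<in> lgen G"
      using meet AB_BA by (intro lgen.meet) auto
    moreover have "inf (inf (x, bh (g x)) (y, bh (g y))) (ag ?d, bh ?d) = (inf x y, bh ?d)"
    proof -
      have "inf x y \<le> ag ?d" by (rule ag2) simp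
      moreover have "bh ?d \<le> bh (g x)" "bh ?d \<le> bh (g y)"
        by (auto intro!: bh_mono simp: hom_inf[OF homg])
      ultimately show ?thesis by (simp add: inf.absorb1 inf.absorb2 le_infI2 le_infI1)
    qed
    ultimately show ?case by simp
  next
    case (join x y)
    have "bh (g (sup x y)) = sup (bh (g x)) (bh (g y))"
    proof (rule antisym)
      show "bh (g (sup x y)) \<le> sup (bh (g x)) (bh (g y))"
        by (rule bh2) (simp add: hom_sup[OF homg] hom_sup[OF homh] h_bh)
      show "sup (bh (g x)) (bh (g y)) \<le> bh (g (sup x y))"
        by (intro le_supI bh_mono) (simp_all add: hom_sup[OF homg])
    qed
    then show ?case using join lgen.join[OF join.IH] by simp
  qed
qed

lemma S'_all: "(bg (h b), b) \<in> lgen G"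
proof -
  have "b \<in> lgen XB" using XB by simp
  then show ?thesis
  proof (induction rule: lgen.induct)
    case (base x) then show ?case by (auto simp: G_def intro: lgen.base)
  next
    case (meet x y)
    let ?d = "h (inf x y)"
    have "inf (inf (bg (h x), x) (bg (h y), y)) (bg ?d, ah ?d) \<in> lgen G"
      using meet AB_BA by (intro lgen.meet) auto
    moreover have "inf (inf (bg (h x), x) (bg (h y), y)) (bg ?d, ah ?d) = (bg ?d, inf x y)"
    proof -
      have "inf x y \<le> ah ?d" by (rule ah2) simp
      moreover have "bg ?d \<le> bg (h x)" "bg ?d \<le> bg (h y)"
        by (auto intro!: bg_mono simp: hom_inf[OF homh])
      ultimately show ?thesis by (simp add: inf.absorb1 inf.absorb2 le_infI2 le_infI1)
    qed
    ultimately show ?case by simp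
  next
    case (join x y)
    have "bg (h (sup x y)) = sup (bg (h x)) (bg (h y))"
    proof (rule antisym)
      show "bg (h (sup x y)) \<le> sup (bg (h x)) (bg (h y))"
        by (rule bg2) (simp add: hom_sup[OF homg] hom_sup[OF homh] g_bg)
      show "sup (bg (h x)) (bg (h y)) \<le> bg (h (sup x y))"
        by (intro le_supI bg_mono) (simp_all add: hom_sup[OF homh])
    qed
    then show ?case using join lgen.join[OF join.IH] by simp
  qed
qed

lemma main: "fin_gen_sublattice {(a, b). g a = h b}"
  unfolding fin_gen_sublattice_def
proof (intro exI conjI)
  show "finite G" by (rule finG)
  show "G \<subseteq> {(a, b). g a = h b}" by (rule G_sub)
  show "lgen G = {(a, b). g a = h b}"
  proof (rule antisym[OF lgen_sub], safe)
    fix a b assume e: "g a = h b"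
    have "sup (a, bh (g a)) (bg (h b), b) \<in> lgen G" using S_all S'_all by (rule lgen.join)
    moreover have "bg (h b) \<le> a" using e by (intro bg2) simp
    moreover have "bh (g a) \<le> b" using e by (intro bh2) simp
    ultimately show "(a, b) \<in> lgen G" by (simp add: sup.absorb1 sup.absorb2)
  qed
qed

end


lemma lower_fun:
  assumes "surj h" "lower_bounded h"
  shows "\<exists>bh. (\<forall>d. d \<le> h (bh d)) \<and> (\<forall>d x. d \<le> h x \<longrightarrow> bh d \<le> x)"
proof -
  have "\<forall>d. \<exists>m. d \<le> h m \<and> (\<forall>x. d \<le> h x \<longrightarrow> m \<le> x)"
  proof
    fix d
    obtain y where "h y = d" using assms(1) by (metis surjD)
    then have "{x. d \<le> h x} \<noteq> {}" by auto
    then show "\<exists>m. d \<le> h m \<and> (\<forall>x. d \<le> h x \<longrightarrow> m \<le> x)"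
      using assms(2) unfolding lower_bounded_def by blast
  qed
  then show ?thesis by metis
qed

lemma upper_fun:
  assumes "surj h" "upper_bounded h"
  shows "\<exists>ah. (\<forall>d. h (ah d) \<le> d) \<and> (\<forall>d x. h x \<le> d \<longrightarrow> x \<le> ah d)"
proof -
  have "\<forall>d. \<exists>m. h m \<le> d \<and> (\<forall>x. h x \<le> d \<longrightarrow> x \<le> m)"
  proof
    fix d
    obtain y where "h y = d" using assms(1) by (metis surjD)
    then have "{x. h x \<le> d} \<noteq> {}" by auto
    then show "\<exists>m. h m \<le> d \<and> (\<forall>x. h x \<le> d \<longrightarrow> x \<le> m)"
      using assms(2) unfolding upper_bounded_def by blast
  qed
  then show ?thesis by metis
qed

theorem mainTheorem1:
  fixes g :: "'a::lattice \<Rightarrow> 'd::lattice" and h :: "'b::lattice \<Rightarrow> 'd" and P :: "'d set"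
  assumes "fin_gen_lattice TYPE('a)" and "fin_gen_lattice TYPE('b)" and "fin_gen_lattice TYPE('d)"
    and "dean_condition P"
    and "lattice_hom g" and "surj g" and "bounded_hom g"
    and "lattice_hom h" and "surj h" and "bounded_hom h"
  shows "fin_gen_sublattice {(a, b). g a = h b}"
proof -
  obtain XA :: "'a set" where XA: "finite XA" "lgen XA = UNIV"
    using assms(1) unfolding fin_gen_lattice_def by blast
  obtain XB :: "'b set" where XB: "finite XB" "lgen XB = UNIV"
    using assms(2) unfolding fin_gen_lattice_def by blast
  obtain bg where bg: "\<forall>d. d \<le> g (bg d)" "\<forall>d x. d \<le> g x \<longrightarrow> bg d \<le> x"
    using lower_fun[OF assms(6)] assms(7) unfolding bounded_hom_def by blast
  obtain ag where ag: "\<forall>d. g (ag d) \<le> d" "\<forall>d x. g x \<le> d \<longrightarrow> x \<le> ag d"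
    using upper_fun[OF assms(6)] assms(7) unfolding bounded_hom_def by blast
  obtain bh where bh: "\<forall>d. d \<le> h (bh d)" "\<forall>d x. d \<le> h x \<longrightarrow> bh d \<le> x"
    using lower_fun[OF assms(9)] assms(10) unfolding bounded_hom_def by blast
  obtain ah where ah: "\<forall>d. h (ah d) \<le> d" "\<forall>d x. h x \<le> d \<longrightarrow> x \<le> ah d"
    using upper_fun[OF assms(9)] assms(10) unfolding bounded_hom_def by blast
  interpret fp g h P XA XB ag bg ah bh
    using assms XA XB bg ag bh ah by unfold_locales auto
  show ?thesis by (rule main)
qed

end
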